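(* Let $\rho$ be a probability measure on $\mathbb{R}$ and write its Lebesgue decomposition as $\rho=a\,\rho_{ac}+b\,\rho_d+c\,\rho_s$, where $a,b,c\ge 0$, $a+b+c=1$, $\rho_{ac}$ is a probability measure with a density with respect to Lebesgue measure, $\rho_d$ is a discrete probability measure and $\rho_s$ is a singular probability measure without atoms. If $a>0$, then \[\forall \alpha>0\qquad \sup_{\|(s,t)\|\ge\alpha}\left|\int_{\mathbb{R}} e^{isz+itz^2}\,d\rho(z)\right|<1.\]
   Context: $\|\cdot\|$ denotes the Euclidean norm on $\mathbb{R}^2$. *)

theory Defs
  imports "HOL-Probability.Probability"
begin

definition discrete_measure :: "real measure \<Rightarrow> bool" where
  "discrete_measure \<mu> \<longleftrightarrow> (\<exists>S. countable S \<and> S \<in> sets borel \<and> measure \<mu> (UNIV - S) = 0)"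

definition singular_continuous_measure :: "real measure \<Rightarrow> bool" where
  "singular_continuous_measure \<mu> \<longleftrightarrow>
     (\<exists>N \<in> sets borel. emeasure lborel N = 0 \<and> measure \<mu> (UNIV - N) = 0)
     \<and> (\<forall>x. measure \<mu> {x} = 0)"

end

theory Submission
  imports Defs
begin
definition win :: "real \<Rightarrow> real \<Rightarrow> real set" where
  "win \<theta> \<delta> = (\<Union>k::int. {\<theta> + 2*pi*k - \<delta> <..< \<theta> + 2*pi*k + \<delta>})"

lemma open_win: "open (win \<theta> \<delta>)"
  unfolding win_def by (intro open_UN ballI open_greaterThanLessThan)

lemma win_leb: "win \<theta> \<delta> \<inter> {a..b} \<in> sets lebesgue"
  by (intro sets.Int) (auto simp: borel_open open_win borel_closed)

lemma card_int_between:
  fixes u v :: real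
  assumes "u \<le> v"
  shows "finite {k::int. u \<le> k \<and> k \<le> v} \<and> real (card {k::int. u \<le> k \<and> k \<le> v}) \<le> v - u + 1"
proof -
  have eq: "{k::int. u \<le> k \<and> k \<le> v} = {\<lceil>u\<rceil>..\<lfloor>v\<rfloor>}"
    by (auto simp: ceiling_le_iff le_floor_iff)
  have "real (nat (\<lfloor>v\<rfloor> - \<lceil>u\<rceil> + 1)) \<le> v - u + 1"
  proof (cases "\<lfloor>v\<rfloor> - \<lceil>u\<rceil> + 1 \<ge> 0")
    case True
    then have "real (nat (\<lfloor>v\<rfloor> - \<lceil>u\<rceil> + 1)) = real_of_int \<lfloor>v\<rfloor> - real_of_int \<lceil>u\<rceil> + 1" by simp
    also have "\<dots> \<le> v - u + 1" using of_int_floor_le[of v] le_of_int_ceiling[of u] by linarith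
    finally show ?thesis .
  next
    case False then show ?thesis using assms by simp
  qed
  then show ?thesis unfolding eq by simp
qed

lemma win_bound:
  assumes d: "0 < \<delta>" "\<delta> \<le> pi" and R: "0 \<le> R"
  shows "measure lebesgue (win \<theta> \<delta> \<inter> {-R..R}) \<le> (R/pi + 2) * (2*\<delta>)"
proof -
  define K where "K = {k::int. (-R-\<delta>-\<theta>)/(2*pi) \<le> k \<and> k \<le> (R+\<delta>-\<theta>)/(2*pi)}"
  define I where "I = (\<lambda>k::int. {\<theta> + 2*pi*k - \<delta> <..< \<theta> + 2*pi*k + \<delta>})"
  have le: "(-R-\<delta>-\<theta>)/(2*pi) \<le> (R+\<delta>-\<theta>)/(2*pi)"
    using d R by (intro divide_right_mono) auto
  from card_int_between[OF le] have fK: "finite K" and cK: "real (card K) \<le> (R+\<delta>-\<theta>)/(2*pi) - (-R-\<delta>-\<theta>)/(2*pi) + 1"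
    unfolding K_def by auto
  have "(R+\<delta>-\<theta>)/(2*pi) - (-R-\<delta>-\<theta>)/(2*pi) = (R + \<delta>)/pi"
    by (simp add: field_simps)
  also have "\<dots> \<le> R/pi + 1" using d by (simp add: add_divide_distrib)
  finally have cK': "real (card K) \<le> R/pi + 2" using cK by linarith
  have sub: "win \<theta> \<delta> \<inter> {-R..R} \<subseteq> (\<Union>k\<in>K. I k)"
  proof
    fix y assume "y \<in> win \<theta> \<delta> \<inter> {-R..R}"
    then obtain k::int where k: "\<theta> + 2*pi*k - \<delta> < y" "y < \<theta> + 2*pi*k + \<delta>" and y: "-R \<le> y" "y \<le> R"
      unfolding win_def by auto
    have "(-R-\<delta>-\<theta>)/(2*pi) \<le> k" using k y pi_gt_zero by (simp add: divide_le_eq algebra_simps)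
    moreover have "k \<le> (R+\<delta>-\<theta>)/(2*pi)" using k y pi_gt_zero by (simp add: le_divide_eq algebra_simps)
    ultimately show "y \<in> (\<Union>k\<in>K. I k)" using k unfolding K_def I_def by auto
  qed
  have "measure lebesgue (win \<theta> \<delta> \<inter> {-R..R}) \<le> measure lebesgue (\<Union>k\<in>K. I k)"
    by (intro measure_mono_fmeasurable sub win_leb) (auto simp: I_def fK intro!: fmeasurable.finite_UN)
  also have "\<dots> \<le> (\<Sum>k\<in>K. measure lebesgue (I k))"
    by (intro measure_UNION_le fK) (auto simp: I_def)
  also have "\<dots> = real (card K) * (2*\<delta>)"
    using d by (simp add: I_def)
  also have "\<dots> \<le> (R/pi + 2) * (2*\<delta>)"
    using cK' d by (intro mult_right_mono) auto
  finally show ?thesis .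
qed


lemma cos_window:
  assumes "cos x > cos \<delta>" "0 < \<delta>" "\<delta> \<le> pi"
  shows "\<exists>k::int. \<bar>x - 2*pi*k\<bar> < \<delta>"
proof -
  define k where "k = \<lfloor>x/(2*pi) + 1/2\<rfloor>"
  define y where "y = x - 2*pi*k"
  have "real_of_int k \<le> x/(2*pi) + 1/2" "x/(2*pi) + 1/2 < real_of_int k + 1"
    unfolding k_def by linarith+
  then have "2*pi*k \<le> x + pi" "x + pi < 2*pi*k + 2*pi" using pi_gt_zero
    by (simp_all add: field_simps)
  then have yb: "-pi \<le> y" "y < pi" unfolding y_def by linarith+
  have "cos y = cos x" unfolding y_def
    by (simp add: cos_diff mult.assoc[symmetric])
  show ?thesis
  proof (rule ccontr)
    assume "\<not> ?thesis"
    then have "\<bar>y\<bar> \<ge> \<delta>" unfolding y_def by (metis not_less)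
    then have "cos \<bar>y\<bar> \<le> cos \<delta>" using assms yb by (intro cos_monotone_0_pi_le) auto
    then show False using \<open>cos y = cos x\<close> assms(1) by simp
  qed
qed

lemma preimage_bound:
  fixes s t M \<gamma> :: real
  assumes J: "J \<in> sets lebesgue" "J \<subseteq> {-M..M}" and g: "0 < \<gamma>"
    and sg: "(\<forall>z\<in>J. s + 2*t*z \<ge> \<gamma>) \<or> (\<forall>z\<in>J. s + 2*t*z \<le> -\<gamma>)"
  shows "measure lebesgue {z\<in>J. s*z + t*z^2 \<in> win \<theta> \<delta>}
          \<le> measure lebesgue (win \<theta> \<delta> \<inter> {-(M*\<bar>s\<bar>+M^2*\<bar>t\<bar>)..M*\<bar>s\<bar>+M^2*\<bar>t\<bar>}) / \<gamma>"
proof -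
  define \<psi> where "\<psi> = (\<lambda>z::real. s*z + t*z^2)"
  define R where "R = M*\<bar>s\<bar>+M^2*\<bar>t\<bar>"
  define S where "S = {z\<in>J. \<psi> z \<in> win \<theta> \<delta>}"
  have cont: "continuous_on UNIV \<psi>" unfolding \<psi>_def by (intro continuous_intros)
  have "open (\<psi> -` win \<theta> \<delta>)"
    using open_vimage[OF open_win cont] by simp
  then have "\<psi> -` win \<theta> \<delta> \<in> sets lebesgue" by (simp add: borel_open)
  moreover have "S = J \<inter> \<psi> -` win \<theta> \<delta>" unfolding S_def by auto
  ultimately have Sleb: "S \<in> sets lebesgue" using J(1) by simp
  have "S \<subseteq> {-M..M}" using J(2) unfolding S_def by auto
  then have Sb: "bounded S" using bounded_closed_interval bounded_subset by blast
  have Sl: "S \<in> lmeasurable" using Sleb Sb by (simp add: bounded_set_imp_lmeasurable)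
  have der: "\<And>z. z \<in> S \<Longrightarrow> (\<psi> has_field_derivative (s + 2*t*z)) (at z within S)"
    unfolding \<psi>_def by (auto intro!: derivative_eq_intros)
  have gam: "\<And>z. z \<in> S \<Longrightarrow> \<gamma> \<le> \<bar>s + 2*t*z\<bar>" using sg unfolding S_def by force
  have inj: "inj_on \<psi> S"
  proof (rule inj_onI)
    fix x y assume xy: "x \<in> S" "y \<in> S" "\<psi> x = \<psi> y"
    have dif: "\<psi> x - \<psi> y = (x - y) * ((s + 2*t*x) + (s + 2*t*y)) / 2"
      unfolding \<psi>_def by (simp add: algebra_simps power2_eq_square)
    have xyJ: "x \<in> J" "y \<in> J" using xy unfolding S_def by auto
    have "(\<gamma> \<le> s + 2*t*x \<and> \<gamma> \<le> s + 2*t*y) \<or> (s + 2*t*x \<le> -\<gamma> \<and> s + 2*t*y \<le> -\<gamma>)"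
      using sg xyJ by blast
    then have "(s + 2*t*x) + (s + 2*t*y) \<noteq> 0"
      using g by linarith
    then show "x = y" using xy dif by simp
  qed
  have imsub: "\<psi> ` S \<subseteq> win \<theta> \<delta> \<inter> {-R..R}"
  proof
    fix y assume "y \<in> \<psi> ` S"
    then obtain z where z: "z \<in> S" "y = \<psi> z" by auto
    have "z \<in> {-M..M}" using z J(2) unfolding S_def by auto
    then have zM: "\<bar>z\<bar> \<le> M" by auto
    then have "z^2 \<le> M^2" using power_mono[OF zM abs_ge_zero, of 2] by simp
    have "\<bar>s*z\<bar> \<le> M*\<bar>s\<bar>" using mult_left_mono[OF zM, of "\<bar>s\<bar>"] by (simp add: abs_mult mult.commute)
    moreover have "\<bar>t*z^2\<bar> \<le> M^2*\<bar>t\<bar>" using mult_left_mono[OF \<open>z^2 \<le> M^2\<close>, of "\<bar>t\<bar>"] by (simp add: abs_mult mult.commute)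
    ultimately have "\<bar>\<psi> z\<bar> \<le> R" unfolding \<psi>_def R_def by linarith
    then show "y \<in> win \<theta> \<delta> \<inter> {-R..R}" using z unfolding S_def by auto
  qed
  have "\<psi> differentiable_on S" using der
    unfolding differentiable_on_def differentiable_def has_field_derivative_def by blast
  then have imleb: "\<psi> ` S \<in> sets lebesgue"
    by (intro differentiable_image_in_sets_lebesgue[OF Sleb]) auto
  have "\<psi> ` S \<subseteq> {-R..R}" using imsub by auto
  then have imb: "bounded (\<psi> ` S)" using bounded_closed_interval bounded_subset by blast
  have iml: "\<psi> ` S \<in> lmeasurable" using imleb imb by (simp add: bounded_set_imp_lmeasurable)
  have "(\<lambda>x. 1::real) absolutely_integrable_on (\<psi> ` S) \<and> integral (\<psi> ` S) (\<lambda>x. 1) = measure lebesgue (\<psi> ` S)"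
    using iml by (simp add: lmeasure_integral absolutely_integrable_on_const)
  then have ci: "(\<lambda>x. \<bar>s + 2*t*x\<bar> * 1) absolutely_integrable_on S \<and> integral S (\<lambda>x. \<bar>s + 2*t*x\<bar> * 1) = measure lebesgue (\<psi> ` S)"
    using has_absolute_integral_change_of_variables_1'[OF Sleb der inj, of "\<lambda>x. 1" "measure lebesgue (\<psi> ` S)"]
    by blast
  have "\<gamma> * measure lebesgue S = integral S (\<lambda>x. \<gamma> * 1)"
    using Sl by (simp only: lmeasure_integral integral_mult_right)
  also have "\<dots> \<le> integral S (\<lambda>x. \<bar>s + 2*t*x\<bar> * 1)"
    using ci gam Sl by (intro integral_le) (auto simp: integrable_on_const absolutely_integrable_on_def)
  also have "\<dots> = measure lebesgue (\<psi> ` S)" using ci by blast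
  also have "\<dots> \<le> measure lebesgue (win \<theta> \<delta> \<inter> {-R..R})"
    using imsub iml
    by (intro measure_mono_fmeasurable) (auto simp: win_leb intro!: bounded_set_imp_lmeasurable)
  finally show ?thesis using g unfolding S_def \<psi>_def R_def by (simp add: field_simps)
qed


lemma preimage_leb:
  assumes "J \<in> sets lebesgue"
  shows "{z\<in>J. s*z + t*z^2 \<in> win \<theta> \<delta>} \<in> sets lebesgue"
proof -
  have cont: "continuous_on UNIV (\<lambda>z::real. s*z + t*z^2)" by (intro continuous_intros)
  have "open ((\<lambda>z::real. s*z + t*z^2) -` win \<theta> \<delta>)"
    using open_vimage[OF open_win cont] by simp
  then have "(\<lambda>z::real. s*z + t*z^2) -` win \<theta> \<delta> \<in> sets lebesgue" by (simp add: borel_open)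
  moreover have "{z\<in>J. s*z + t*z^2 \<in> win \<theta> \<delta>} = J \<inter> (\<lambda>z::real. s*z + t*z^2) -` win \<theta> \<delta>" by auto
  ultimately show ?thesis using assms by simp
qed

lemma norm_pair_le: "norm (s::real, t::real) \<le> \<bar>s\<bar> + \<bar>t\<bar>"
proof -
  have "norm (s,t) = norm ((s,0::real) + (0::real,t))" by simp
  also have "\<dots> \<le> norm (s,0::real) + norm (0::real,t)" by (rule norm_triangle_ineq)
  finally show ?thesis by (simp add: norm_Pair)
qed

lemma KML:
  fixes M \<alpha> \<kappa> :: real
  assumes M: "1 \<le> M" and a: "0 < \<alpha>" and k: "0 < \<kappa>"
  shows "\<exists>\<delta>>0. \<delta> \<le> pi \<and> (\<forall>s t \<theta>. \<alpha> \<le> norm (s,t) \<longrightarrow>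
           measure lebesgue {z\<in>{-M..M}. s*z + t*z^2 \<in> win \<theta> \<delta>} < \<kappa>)"
proof -
  define \<tau> where "\<tau> = \<alpha> / (4*M+1)"
  define g where "g = \<kappa>/3"
  define C where "C = 8*M + 16/\<alpha> + 10*M^2/g + 4/(g*\<tau>)"
  have tau: "0 < \<tau>" using a M unfolding \<tau>_def by simp
  have gp: "0 < g" using k unfolding g_def by simp
  have Cp: "0 < C" unfolding C_def using M a gp tau by (intro add_pos_nonneg) auto
  define \<delta> where "\<delta> = min pi (\<kappa>/(4*C))"
  have dp: "0 < \<delta>" unfolding \<delta>_def using k Cp by simp
  have dpi: "\<delta> \<le> pi" unfolding \<delta>_def by simp
  have dC: "\<delta> * C \<le> \<kappa>/4" unfolding \<delta>_def using Cp
    by (metis min.cobounded2 mult_right_mono less_imp_le nonzero_divide_mult_cancel_right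
        times_divide_eq_left divide_divide_eq_left mult.commute order_trans le_divide_eq Cp)
  show ?thesis
  proof (intro exI[of _ \<delta>] conjI allI impI dp dpi)
    fix s t \<theta> :: real
    assume st: "\<alpha> \<le> norm (s,t)"
    have nst: "\<alpha> \<le> \<bar>s\<bar> + \<bar>t\<bar>" using st norm_pair_le[of s t] by linarith
    define S where "S = {z\<in>{-M..M}. s*z + t*z^2 \<in> win \<theta> \<delta>}"
    define R where "R = M*\<bar>s\<bar>+M^2*\<bar>t\<bar>"
    have Rnn: "0 \<le> R" unfolding R_def using M by simp
    have wb: "measure lebesgue (win \<theta> \<delta> \<inter> {-R..R}) \<le> (R/pi + 2) * (2*\<delta>)"
      by (rule win_bound[OF dp dpi Rnn])
    show "measure lebesgue S < \<kappa>"
    proof (cases "4*M*\<bar>t\<bar> \<le> \<bar>s\<bar>")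
      case True
      have sa: "\<alpha>/2 \<le> \<bar>s\<bar>"
      proof -
        have "\<bar>t\<bar> \<le> \<bar>s\<bar>" using True M by (smt (verit) mult_le_cancel_right1 abs_ge_zero mult_right_mono)
        then show ?thesis using nst by linarith
      qed
      have sp: "0 < \<bar>s\<bar>" using sa a by linarith
      have tz: "\<bar>2*t*z\<bar> \<le> \<bar>s\<bar>/2" if "z \<in> {-M..M}" for z
      proof -
        have "\<bar>z\<bar> \<le> M" using that by auto
        then have "\<bar>2*t*z\<bar> \<le> 2*\<bar>t\<bar>*M" by (simp add: abs_mult mult_left_mono)
        moreover have "2*\<bar>t\<bar>*M = (4*M*\<bar>t\<bar>)/2" by simp
        ultimately show ?thesis using True by linarith
      qed
      have sg: "(\<forall>z\<in>{-M..M}. s + 2*t*z \<ge> \<bar>s\<bar>/2) \<or> (\<forall>z\<in>{-M..M}. s + 2*t*z \<le> -(\<bar>s\<bar>/2))"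
      proof (cases "s \<ge> 0")
        case True
        have "s + 2*t*z \<ge> \<bar>s\<bar>/2" if z: "z \<in> {-M..M}" for z
        proof -
          have "-(\<bar>s\<bar>/2) \<le> 2*t*z" using tz[OF z] unfolding abs_le_iff by linarith
          then show ?thesis using True by simp
        qed
        then show ?thesis by blast
      next
        case False
        have "s + 2*t*z \<le> -(\<bar>s\<bar>/2)" if z: "z \<in> {-M..M}" for z
        proof -
          have "2*t*z \<le> \<bar>s\<bar>/2" using tz[OF z] unfolding abs_le_iff by linarith
          then show ?thesis using False by simp
        qed
        then show ?thesis by blast
      qed
      have "measure lebesgue S \<le> measure lebesgue (win \<theta> \<delta> \<inter> {-R..R}) / (\<bar>s\<bar>/2)"
        unfolding S_def R_def
        by (rule preimage_bound[OF _ order_refl _ sg]) (use sp in auto)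
      also have "\<dots> \<le> (R/pi + 2) * (2*\<delta>) / (\<bar>s\<bar>/2)"
        using wb sp by (intro divide_right_mono) auto
      also have "\<dots> \<le> (2*M*\<bar>s\<bar> + 2) * (2*\<delta>) / (\<bar>s\<bar>/2)"
      proof -
        have "M^2*\<bar>t\<bar> \<le> M*\<bar>s\<bar>" using True M
          by (simp add: power2_eq_square)
        then have "R \<le> 2*M*\<bar>s\<bar>" unfolding R_def by linarith
        moreover have "R/pi \<le> R" using Rnn pi_ge_two by (simp add: divide_le_eq) (smt (verit) mult_le_cancel_left1)
        ultimately have "R/pi + 2 \<le> 2*M*\<bar>s\<bar> + 2" by linarith
        then show ?thesis using dp sp by (intro divide_right_mono mult_right_mono) auto
      qed
      also have "\<dots> = 8*M*\<delta> + 8*\<delta>/\<bar>s\<bar>" using sp by (simp add: field_simps)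
      also have "\<dots> \<le> 8*M*\<delta> + 16*\<delta>/\<alpha>"
      proof -
        have "8*\<delta>/\<bar>s\<bar> \<le> 8*\<delta>/(\<alpha>/2)" using sa a dp by (intro divide_left_mono) auto
        then show ?thesis by simp
      qed
      also have "\<dots> \<le> \<delta> * C"
        unfolding C_def using dp gp tau M by (simp add: algebra_simps)
      also have "\<dots> < \<kappa>" using dC k by linarith
      finally show ?thesis .
    next
      case False
      have tt: "\<tau> < \<bar>t\<bar>"
      proof -
        have "\<alpha> < (4*M+1)*\<bar>t\<bar>" using False nst by (simp add: algebra_simps)
        then show ?thesis unfolding \<tau>_def using M by (simp add: divide_less_eq mult.commute)
      qed
      have tp: "0 < \<bar>t\<bar>" using tt tau by linarith
      define \<gamma> where "\<gamma> = g*\<bar>t\<bar>"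
      have gam: "0 < \<gamma>" unfolding \<gamma>_def using gp tp by simp
      define J1 where "J1 = {z\<in>{-M..M}. \<gamma> \<le> s + 2*t*z}"
      define J2 where "J2 = {z\<in>{-M..M}. s + 2*t*z \<le> -\<gamma>}"
      define B where "B = {-s/(2*t) - g/2 .. -s/(2*t) + g/2}"
      have "closed J1" unfolding J1_def
        by (rule continuous_on_closed_Collect_le[of "{-M..M}" "\<lambda>z. \<gamma>" "\<lambda>z. s+2*t*z"])
           (auto intro!: continuous_intros)
      then have J1l: "J1 \<in> sets lebesgue" by (simp add: borel_closed)
      have "closed J2" unfolding J2_def
        by (rule continuous_on_closed_Collect_le[of "{-M..M}" "\<lambda>z. s+2*t*z" "\<lambda>z. -\<gamma>"])
           (auto intro!: continuous_intros)
      then have J2l: "J2 \<in> sets lebesgue" by (simp add: borel_closed)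
      define S1 where "S1 = {z\<in>J1. s*z + t*z^2 \<in> win \<theta> \<delta>}"
      define S2 where "S2 = {z\<in>J2. s*z + t*z^2 \<in> win \<theta> \<delta>}"
      have S1l: "S1 \<in> sets lebesgue" unfolding S1_def by (rule preimage_leb[OF J1l])
      have S2l: "S2 \<in> sets lebesgue" unfolding S2_def by (rule preimage_leb[OF J2l])
      have Sl: "S \<in> sets lebesgue" unfolding S_def by (rule preimage_leb) auto
      have Bl: "B \<in> sets lebesgue" unfolding B_def by simp
      have sub: "S \<subseteq> B \<union> S1 \<union> S2"
      proof
        fix z assume z: "z \<in> S"
        show "z \<in> B \<union> S1 \<union> S2"
        proof (cases "\<bar>s + 2*t*z\<bar> < \<gamma>")
          case True
          have "\<bar>z + s/(2*t)\<bar> = \<bar>s + 2*t*z\<bar> / (2*\<bar>t\<bar>)"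
            using tp by (simp add: field_simps abs_divide abs_mult)
          also have "\<dots> \<le> \<gamma>/(2*\<bar>t\<bar>)" using True tp by (intro divide_right_mono) auto
          also have "\<dots> = g/2" unfolding \<gamma>_def using tp by simp
          finally have h: "\<bar>z + s/(2*t)\<bar> \<le> g/2" .
          have h1: "-(g/2) \<le> z + s/(2*t)" using h unfolding abs_le_iff by linarith
          have h2: "z + s/(2*t) \<le> g/2" using h unfolding abs_le_iff by linarith
          have "z \<in> B" unfolding B_def atLeastAtMost_iff using h1 h2 by (intro conjI; linarith)
          then show ?thesis by simp
        next
          case False
          then have "\<gamma> \<le> s + 2*t*z \<or> s + 2*t*z \<le> -\<gamma>" by linarith
          then show ?thesis using z unfolding S_def S1_def S2_def J1_def J2_def by auto
        qed
      qed
      have bS1: "measure lebesgue S1 \<le> measure lebesgue (win \<theta> \<delta> \<inter> {-R..R}) / \<gamma>"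
        unfolding S1_def R_def by (rule preimage_bound[OF J1l _ gam]) (auto simp: J1_def)
      have bS2: "measure lebesgue S2 \<le> measure lebesgue (win \<theta> \<delta> \<inter> {-R..R}) / \<gamma>"
        unfolding S2_def R_def by (rule preimage_bound[OF J2l _ gam]) (auto simp: J2_def)
      have piece: "measure lebesgue (win \<theta> \<delta> \<inter> {-R..R}) / \<gamma> \<le> \<kappa>/4"
      proof -
        have "M*\<bar>s\<bar> \<le> M*(4*M*\<bar>t\<bar>)" using False M by (intro mult_left_mono) auto
        then have "R \<le> 5*M^2*\<bar>t\<bar>" unfolding R_def by (simp add: power2_eq_square algebra_simps)
        moreover have "R/pi \<le> R" using Rnn pi_ge_two by (simp add: divide_le_eq) (smt (verit) mult_le_cancel_left1)
        ultimately have "R/pi + 2 \<le> 5*M^2*\<bar>t\<bar> + 2" by linarith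
        then have "measure lebesgue (win \<theta> \<delta> \<inter> {-R..R}) / \<gamma> \<le> (5*M^2*\<bar>t\<bar> + 2) * (2*\<delta>) / \<gamma>"
          using wb gam dp by (intro divide_right_mono) (auto intro: order_trans mult_right_mono)
        also have "\<dots> = 10*M^2*\<delta>/g + 4*\<delta>/(g*\<bar>t\<bar>)"
          unfolding \<gamma>_def using gp tp by (simp add: field_simps)
        also have "\<dots> \<le> 10*M^2*\<delta>/g + 4*\<delta>/(g*\<tau>)"
          using gp tau tt dp by (intro add_left_mono divide_left_mono mult_left_mono) auto
        also have "\<dots> \<le> \<delta> * C"
          unfolding C_def using dp gp tau M a by (simp add: algebra_simps)
        finally show ?thesis using dC by linarith
      qed
      have "measure lebesgue S \<le> measure lebesgue (B \<union> S1 \<union> S2)"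
      proof (rule measure_mono_fmeasurable[OF sub Sl])
        have "B \<union> S1 \<union> S2 \<subseteq> {-s/(2*t) - g/2 .. -s/(2*t) + g/2} \<union> {-M..M}"
          unfolding B_def S1_def S2_def J1_def J2_def by auto
        then have "bounded (B \<union> S1 \<union> S2)"
          by (meson bounded_Un bounded_closed_interval bounded_subset)
        then show "B \<union> S1 \<union> S2 \<in> lmeasurable"
          using Bl S1l S2l by (intro bounded_set_imp_lmeasurable) auto
      qed
      also have "\<dots> \<le> measure lebesgue (B \<union> S1) + measure lebesgue S2"
        using Bl S1l S2l by (intro measure_Un_le) auto
      also have "\<dots> \<le> measure lebesgue B + measure lebesgue S1 + measure lebesgue S2"
        using Bl S1l by (simp add: measure_Un_le)
      also have "\<dots> \<le> g + \<kappa>/4 + \<kappa>/4"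
      proof -
        have mB: "measure lebesgue B = g" unfolding B_def using gp by simp
        show ?thesis using bS1 bS2 piece mB by linarith
      qed
      also have "\<dots> < \<kappa>" unfolding g_def using k by simp
      finally show ?thesis .
    qed
  qed
qed


lemma ac_eps:
  fixes N :: "real measure"
  assumes fin: "finite_measure N" and sN: "sets N = sets borel"
    and ac: "absolutely_continuous lborel N" and e: "0 < e"
  shows "\<exists>\<kappa>>0. \<forall>W\<in>sets borel. emeasure lborel W < ennreal \<kappa> \<longrightarrow> measure N W < e"
proof (rule ccontr)
  assume H: "\<not> ?thesis"
  have ex: "\<forall>n::nat. \<exists>W. W \<in> sets borel \<and> emeasure lborel W < ennreal ((1/2)^n) \<and> e \<le> measure N W"
  proof
    fix n::nat show "\<exists>W. W \<in> sets borel \<and> emeasure lborel W < ennreal ((1/2)^n) \<and> e \<le> measure N W"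
    proof -
    have "(0::real) < (1/2)^n" by simp
    moreover from H have "\<forall>\<kappa>>0. \<exists>W\<in>sets borel. emeasure lborel W < ennreal \<kappa> \<and> e \<le> measure N W"
      by (meson not_less)
    ultimately show ?thesis by blast
  qed
  qed
  from choice[OF ex] obtain W where W0: "\<forall>n. W n \<in> sets borel \<and> emeasure lborel (W n) < ennreal ((1/2)^n) \<and> e \<le> measure N (W n)"
    by blast
  have W: "\<And>n. W n \<in> sets borel" "\<And>n. emeasure lborel (W n) < ennreal ((1/2)^n)"
      "\<And>n. e \<le> measure N (W n)" using W0 by auto
  have Wl[measurable]: "W n \<in> sets lborel" for n using W(1) by simp
  have Wfin: "emeasure lborel (W n) < \<infinity>" for n
    using order.strict_trans[OF W(2)[of n] ennreal_less_top] by simp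
  have Wm: "measure lborel (W n) \<le> (1/2)^n" for n
  proof -
    have "emeasure lborel (W n) = ennreal (measure lborel (W n))"
      unfolding measure_def using Wfin[of n] by simp
    then have "ennreal (measure lborel (W n)) < ennreal ((1/2)^n)" using W(2)[of n] by simp
    then have "measure lborel (W n) < (1/2)^n" using ennreal_less_iff[OF measure_nonneg[of lborel "W n"]] by blast
    then show ?thesis by simp
  qed
  have sm: "summable (\<lambda>n. measure lborel (W n))"
  proof (rule summable_comparison_test[of _ "\<lambda>n. (1/2::real)^n"])
    show "\<exists>N. \<forall>n\<ge>N. norm (measure lborel (W n)) \<le> (1/2)^n"
    proof (intro exI[of _ 0] allI impI)
      fix n::nat
      have "norm (measure lborel (W n)) = measure lborel (W n)"
        by (rule real_norm_def[THEN trans], rule abs_of_nonneg[OF measure_nonneg])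
      then show "norm (measure lborel (W n)) \<le> (1/2)^n" using Wm[of n] by linarith
    qed
    show "summable (\<lambda>n. (1/2::real)^n)" by (rule summable_geometric) simp
  qed
  have "limsup W \<in> null_sets lborel"
    by (rule borel_cantelli_limsup1[OF Wl Wfin sm])
  then have nullN: "limsup W \<in> null_sets N" using ac unfolding absolutely_continuous_def by (rule subsetD[rotated])
  define A where "A = (\<lambda>n. \<Union>k\<in>{n..}. W k)"
  have Asets: "range A \<subseteq> sets N" unfolding A_def using W(1) sN by auto
  have Aanti: "antimono A" unfolding A_def
  proof (intro antimonoI subsetI)
    fix m n :: nat and x assume mn: "m \<le> n" and x: "x \<in> (\<Union>k\<in>{n..}. W k)"
    then obtain k where "k \<ge> n" "x \<in> W k" by auto
    then show "x \<in> (\<Union>k\<in>{m..}. W k)" using mn by auto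
  qed
  have lim: "(\<lambda>n. measure N (A n)) \<longlonglongrightarrow> measure N (\<Inter>(range A))"
    by (rule finite_measure.finite_Lim_measure_decseq[OF fin Asets Aanti])
  have "\<Inter>(range A) = limsup W" unfolding A_def limsup_INF_SUP by simp
  moreover have "measure N (limsup W) = 0" using nullN by (auto simp: null_sets_def measure_def)
  ultimately have lim0: "(\<lambda>n. measure N (A n)) \<longlonglongrightarrow> 0" using lim by simp
  have "e \<le> measure N (A n)" for n
  proof -
    have "measure N (W n) \<le> measure N (A n)"
      using Asets W(1) sN unfolding A_def
      by (intro finite_measure.finite_measure_mono[OF fin]) auto
    then show ?thesis using W(3)[of n] by linarith
  qed
  then have "e \<le> 0" using lim0 by (intro LIMSEQ_le_const[OF lim0]) auto
  then show False using e by simp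
qed

lemma tail_bound:
  fixes N :: "real measure"
  assumes fin: "finite_measure N" and sN: "sets N = sets borel" and e: "0 < e"
  shows "\<exists>M\<ge>1. measure N (UNIV - {-M..M}) < e"
proof -
  define A where "A = (\<lambda>n::nat. {x::real. real n + 1 < \<bar>x\<bar>})"
  have "open (A n)" for n unfolding A_def by (intro open_Collect_less continuous_intros)
  then have Asets: "range A \<subseteq> sets N" using sN by (auto simp: borel_open)
  have Aanti: "antimono A"
  proof (intro antimonoI subsetI)
    fix m n :: nat and x assume mn: "m \<le> n" and x: "x \<in> A n"
    have "real m \<le> real n" using mn by simp
    then show "x \<in> A m" using x unfolding A_def by simp
  qed
  have lim: "(\<lambda>n. measure N (A n)) \<longlonglongrightarrow> measure N (\<Inter>(range A))"
    by (rule finite_measure.finite_Lim_measure_decseq[OF fin Asets Aanti])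
  have "\<Inter>(range A) = {}"
  proof -
    have "x \<notin> A (nat \<lceil>\<bar>x\<bar>\<rceil>)" for x
    proof -
      have h: "\<bar>x\<bar> \<le> real (nat \<lceil>\<bar>x\<bar>\<rceil>)" by linarith
      show ?thesis
      proof
        assume "x \<in> A (nat \<lceil>\<bar>x\<bar>\<rceil>)"
        then have "real (nat \<lceil>\<bar>x\<bar>\<rceil>) + 1 < \<bar>x\<bar>" unfolding A_def by (simp only: mem_Collect_eq)
        then show False using h by linarith
      qed
    qed
    then show ?thesis by blast
  qed
  then have "(\<lambda>n. measure N (A n)) \<longlonglongrightarrow> 0" using lim by simp
  then have "eventually (\<lambda>n. measure N (A n) < e) sequentially"
    using e by (intro order_tendstoD(2)) auto
  then obtain n where n: "measure N (A n) < e" by (auto simp: eventually_sequentially)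
  have "UNIV - {-(real n + 1)..real n + 1} = A n" unfolding A_def by auto
  then have "measure N (UNIV - {-(real n + 1)..real n + 1}) < e" using n by simp
  then show ?thesis by (intro exI[of _ "real n + 1"]) auto
qed

theorem proposition2:
  fixes \<rho> \<rho>ac \<rho>d \<rho>s :: "real measure" and a b c :: real
  assumes "prob_space \<rho>" "sets \<rho> = sets borel"
    and "prob_space \<rho>ac" "sets \<rho>ac = sets borel" "absolutely_continuous lborel \<rho>ac"
    and "prob_space \<rho>d" "sets \<rho>d = sets borel" "discrete_measure \<rho>d"
    and "prob_space \<rho>s" "sets \<rho>s = sets borel" "singular_continuous_measure \<rho>s"
    and "a \<ge> 0" "b \<ge> 0" "c \<ge> 0" "a + b + c = 1"
    and "\<forall>A \<in> sets borel. measure \<rho> A =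
            a * measure \<rho>ac A + b * measure \<rho>d A + c * measure \<rho>s A"
    and "a > 0"
  shows "\<forall>\<alpha>>0. (SUP p \<in> {p :: real \<times> real. norm p \<ge> \<alpha>}.
            norm (\<integral>z. cis (fst p * z + snd p * z\<^sup>2) \<partial>\<rho>)) < 1"
proof (intro allI impI)
  fix \<alpha> :: real assume \<alpha>: "\<alpha> > 0"
  interpret R: prob_space \<rho> by fact
  interpret Rac: prob_space \<rho>ac by fact
  interpret Rd: prob_space \<rho>d by fact
  interpret Rs: prob_space \<rho>s by fact
  have finac: "finite_measure \<rho>ac" by (rule Rac.finite_measure_axioms)
  have sR: "sets \<rho> = sets borel" and sac: "sets \<rho>ac = sets borel"
    and sd: "sets \<rho>d = sets borel" and ss: "sets \<rho>s = sets borel" using assms by auto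
  obtain M where M: "1 \<le> M" "measure \<rho>ac (UNIV - {-M..M}) < 1/4"
    using tail_bound[OF finac sac, of "1/4"] by auto
  obtain \<kappa> where \<kappa>: "\<kappa> > 0" "\<forall>W\<in>sets borel. emeasure lborel W < ennreal \<kappa> \<longrightarrow> measure \<rho>ac W < 1/4"
    using ac_eps[OF finac sac assms(5), of "1/4"] by auto
  obtain \<delta> where \<delta>: "0 < \<delta>" "\<delta> \<le> pi"
    "\<forall>s t \<theta>. \<alpha> \<le> norm (s,t) \<longrightarrow> measure lebesgue {z\<in>{-M..M}. s*z + t*z^2 \<in> win \<theta> \<delta>} < \<kappa>"
    using KML[OF M(1) \<alpha> \<kappa>(1)] by auto
  define \<eta> where "\<eta> = 1 - cos \<delta>"
  have "cos \<delta> < cos 0" using \<delta> by (intro cos_monotone_0_pi) auto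
  then have \<eta>p: "0 < \<eta>" unfolding \<eta>_def by simp
  have \<eta>2: "\<eta> \<le> 2" unfolding \<eta>_def using cos_ge_minus_one[of \<delta>] by linarith
  have a1: "a \<le> 1" using assms(13,14,15) by linarith
  have key: "norm (\<integral>z. cis (fst p * z + snd p * z\<^sup>2) \<partial>\<rho>) \<le> 1 - a*\<eta>/2" if p: "\<alpha> \<le> norm p" for p
  proof -
    obtain s t where pst: "p = (s,t)" by (cases p)
    have st: "\<alpha> \<le> norm (s,t)" using p pst by simp
    define F where "F = (\<integral>z. cis (s*z + t*z\<^sup>2) \<partial>\<rho>)"
    have "0 \<le> 1 - a*\<eta>/2"
    proof -
      have "a*\<eta> \<le> 1*2" using a1 \<eta>2 \<eta>p assms(12) by (intro mult_mono) auto
      then show ?thesis by simp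
    qed
    have goal: "norm F \<le> 1 - a*\<eta>/2"
    proof (cases "F = 0")
      case True then show ?thesis using \<open>0 \<le> 1 - a*\<eta>/2\<close> by simp
    next
      case False
      define \<theta> where "\<theta> = Arg F"
      have bmeq: "(borel_measurable \<rho> :: (real \<Rightarrow> complex) set) = borel_measurable borel"
        by (rule measurable_cong_sets[OF sR refl])
      have bmeq2: "(borel_measurable \<rho> :: (real \<Rightarrow> real) set) = borel_measurable borel"
        by (rule measurable_cong_sets[OF sR refl])
      have meas: "(\<lambda>z. cis (s*z + t*z\<^sup>2 - \<theta>)) \<in> borel_measurable \<rho>"
      proof -
        have "(\<lambda>z. cis (s*z + t*z\<^sup>2 - \<theta>)) \<in> borel_measurable borel"
          by (intro borel_measurable_continuous_onI continuous_intros)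
        then show ?thesis using bmeq by simp
      qed
      have measc: "(\<lambda>z. cos (s*z + t*z\<^sup>2 - \<theta>)) \<in> borel_measurable \<rho>"
      proof -
        have "(\<lambda>z. cos (s*z + t*z\<^sup>2 - \<theta>)) \<in> borel_measurable borel"
          by (intro borel_measurable_continuous_onI continuous_intros)
        then show ?thesis using bmeq2 by simp
      qed
      have intc: "integrable \<rho> (\<lambda>z. cis (s*z + t*z\<^sup>2 - \<theta>))"
        by (rule R.integrable_const_bound[where B=1]) (use meas in auto)
      have intcos: "integrable \<rho> (\<lambda>z. cos (s*z + t*z\<^sup>2 - \<theta>))"
        by (rule R.integrable_const_bound[where B=1]) (use measc in auto)
      have "F = rcis (cmod F) \<theta>" unfolding \<theta>_def by (simp add: rcis_cmod_Arg)
      then have "cis (-\<theta>) * F = complex_of_real (cmod F)"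
        by (metis cis_mult cis_zero mult.commute mult.left_commute mult.right_neutral rcis_def add.left_inverse)
      also have "cis (-\<theta>) * F = (\<integral>z. cis (-\<theta>) * cis (s*z + t*z\<^sup>2) \<partial>\<rho>)"
        unfolding F_def by simp
      also have "\<dots> = (\<integral>z. cis (s*z + t*z\<^sup>2 - \<theta>) \<partial>\<rho>)"
        by (simp add: cis_mult algebra_simps)
      finally have "cmod F = Re (\<integral>z. cis (s*z + t*z\<^sup>2 - \<theta>) \<partial>\<rho>)"
        by (metis Re_complex_of_real)
      also have "\<dots> = (\<integral>z. cos (s*z + t*z\<^sup>2 - \<theta>) \<partial>\<rho>)"
        using integral_Re[OF intc] by simp
      finally have nF: "cmod F = (\<integral>z. cos (s*z + t*z\<^sup>2 - \<theta>) \<partial>\<rho>)" .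
      define A where "A = {z. cos \<delta> < cos (s*z + t*z\<^sup>2 - \<theta>)}"
      have "open A" unfolding A_def
        by (intro open_Collect_less continuous_intros)
      then have Ab: "A \<in> sets borel" by (simp add: borel_open)
      have i1: "integrable \<rho> (\<lambda>z. cos \<delta>)" by simp
      have i2: "integrable \<rho> (\<lambda>z. \<eta> * indicator A z)"
        using Ab sR by (intro integrable_mult_right integrable_real_indicator) (auto simp: less_top[symmetric] R.emeasure_finite)
      have intind: "integrable \<rho> (\<lambda>z. cos \<delta> + \<eta> * indicator A z)"
        by (rule Bochner_Integration.integrable_add[OF i1 i2])
      have "cmod F \<le> (\<integral>z. cos \<delta> + \<eta> * indicator A z \<partial>\<rho>)"
        unfolding nF
      proof (rule integral_mono[OF intcos intind])
        fix z
        show "cos (s*z + t*z\<^sup>2 - \<theta>) \<le> cos \<delta> + \<eta> * indicator A z"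
        proof (cases "z \<in> A")
          case True then show ?thesis unfolding \<eta>_def by simp
        next
          case False then show ?thesis unfolding A_def by simp
        qed
      qed
      also have "\<dots> = cos \<delta> + \<eta> * measure \<rho> A"
      proof -
        have "(\<integral>z. cos \<delta> + \<eta> * indicator A z \<partial>\<rho>) = (\<integral>z. cos \<delta> \<partial>\<rho>) + (\<integral>z. \<eta> * indicator A z \<partial>\<rho>)"
          by (rule Bochner_Integration.integral_add[OF i1 i2])
        also have "(\<integral>z. cos \<delta> \<partial>\<rho>) = cos \<delta>" by (simp add: R.prob_space)
        also have "(\<integral>z. \<eta> * indicator A z \<partial>\<rho>) = \<eta> * measure \<rho> A"
          using Ab sR by (simp add: less_top[symmetric] R.emeasure_finite)
        finally show ?thesis .
      qed
      finally have F1: "cmod F \<le> cos \<delta> + \<eta> * measure \<rho> A" .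
      define S where "S = {z\<in>{-M..M}. s*z + t*z^2 \<in> win \<theta> \<delta>}"
      have subS: "A \<inter> {-M..M} \<subseteq> S"
      proof
        fix z assume z: "z \<in> A \<inter> {-M..M}"
        then obtain k::int where k: "\<bar>(s*z + t*z\<^sup>2 - \<theta>) - 2*pi*k\<bar> < \<delta>"
          using cos_window[of \<delta> "s*z + t*z\<^sup>2 - \<theta>"] \<delta>(1,2) unfolding A_def by auto
        then have "s*z + t*z^2 \<in> {\<theta> + 2*pi*k - \<delta> <..< \<theta> + 2*pi*k + \<delta>}"
          by (auto simp: abs_less_iff)
        then show "z \<in> S" using z unfolding S_def win_def by auto
      qed
      have cont: "continuous_on UNIV (\<lambda>z::real. s*z + t*z^2)" by (intro continuous_intros)
      have "open ((\<lambda>z::real. s*z + t*z^2) -` win \<theta> \<delta>)"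
        using open_vimage[OF open_win cont] by simp
      moreover have "S = {-M..M} \<inter> (\<lambda>z::real. s*z + t*z^2) -` win \<theta> \<delta>" unfolding S_def by auto
      ultimately have Sb: "S \<in> sets borel" by (simp add: borel_open)
      have "S \<subseteq> {-M..M}" unfolding S_def by auto
      then have "bounded S" using bounded_closed_interval bounded_subset by blast
      then have Sl: "S \<in> lmeasurable" using Sb by (intro bounded_set_imp_lmeasurable) auto
      have "emeasure lborel S = emeasure lebesgue S" using Sb by simp
      also have "\<dots> = ennreal (measure lebesgue S)" using Sl by (simp add: emeasure_eq_measure2)
      also have "\<dots> < ennreal \<kappa>"
        using \<delta>(3) st \<kappa>(1) unfolding S_def by (simp add: ennreal_less_iff)
      finally have "measure \<rho>ac S < 1/4" using \<kappa>(2) Sb by blast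
      have "measure \<rho>ac A \<le> measure \<rho>ac ((A \<inter> {-M..M}) \<union> (UNIV - {-M..M}))"
        using Ab sac by (intro Rac.finite_measure_mono) auto
      also have "\<dots> \<le> measure \<rho>ac (A \<inter> {-M..M}) + measure \<rho>ac (UNIV - {-M..M})"
        using Ab sac by (intro measure_Un_le) auto
      also have "measure \<rho>ac (A \<inter> {-M..M}) \<le> measure \<rho>ac S"
        using subS Sb sac by (intro Rac.finite_measure_mono) auto
      finally have Aac: "measure \<rho>ac A \<le> 1/2"
        using \<open>measure \<rho>ac S < 1/4\<close> M(2) by linarith
      have "measure \<rho> A = a * measure \<rho>ac A + b * measure \<rho>d A + c * measure \<rho>s A"
        using assms(16) Ab by blast
      also have "\<dots> \<le> a * (1/2) + b * 1 + c * 1"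
        using Aac assms(12,13,14) Rd.prob_le_1 Rs.prob_le_1
        by (intro add_mono mult_left_mono) auto
      finally have "measure \<rho> A \<le> 1 - a/2" using assms(15) by linarith
      then have "\<eta> * measure \<rho> A \<le> \<eta> * (1 - a/2)" using \<eta>p by (intro mult_left_mono) auto
      then show ?thesis using F1 unfolding \<eta>_def by (simp add: algebra_simps)
    qed
    then show ?thesis using pst F_def by simp
  qed
  have ne: "{p :: real \<times> real. norm p \<ge> \<alpha>} \<noteq> {}"
  proof -
    have "norm (\<alpha>, 0::real) \<ge> \<alpha>" by (simp add: norm_Pair)
    then show ?thesis by blast
  qed
  have "(SUP p \<in> {p :: real \<times> real. norm p \<ge> \<alpha>}. norm (\<integral>z. cis (fst p * z + snd p * z\<^sup>2) \<partial>\<rho>))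
        \<le> 1 - a*\<eta>/2"
    by (rule cSUP_least[OF ne]) (use key in auto)
  moreover have "0 < a*\<eta>" using assms(17) \<eta>p by simp
  ultimately show "(SUP p \<in> {p :: real \<times> real. norm p \<ge> \<alpha>}. norm (\<integral>z. cis (fst p * z + snd p * z\<^sup>2) \<partial>\<rho>)) < 1"
    by linarith
qed

end
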